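(* Assume that for every company $i\in\mathcal C$, every vehicle of company $i$ can reach at least one station and $\overline{\mathcal K}_i\ne\emptyset$, and use the system optimal pricing policies. Let $F_1=A^TA_GA$ where $A^T=[N_i\mathbb I_m]_{i\in\mathcal C}\in\mathbb R^{m|\mathcal C|\times m}$ (so $Ax=\sigma(x)$), and let $\lambda_{\max}(F_1)$ be its largest eigenvalue. Then for every $\gamma$ with $0<\gamma<2/\lambda_{\max}(F_1)$ and every initial point $x(0)\in\overline{\mathcal K}$, the iteration $$x^i(k+1)=\tfrac12\Big(x^i(k)+\Pi_{\overline{\mathcal K}_i}\big[x^i(k)-\gamma\nabla_{x^i}J^i(x^i(k),x^{-i}(k))\big]\Big),\qquad i\in\mathcal C,$$ converges to a Nash equilibrium of the game $G$.
   Context: Setting: $\mathcal C$ is a finite nonempty set of companies; $\mathcal M$ is a finite set of charging stations with $m=|\mathcal M|\ge2$. Company $i$ owns a finite set $\mathcal V_i$ of vehicles, $N_i=|\mathcal V_i|\ge1$, and $\mathcal F^i_j\subseteq\mathcal V_i$ is the set of its vehicles that can reach station $j$. $\mathcal P_{\mathcal M}=\{x\in\mathbb R_{\ge0}^{\mathcal M}:\sum_j x_j=1\}$. For each $i$, $\overline{\mathcal K}_i$ is the set of $x^i\in\mathcal P_{\mathcal M}$ such that for every proper subset $S\subsetneq\mathcal M$: $N_i\sum_{j\in S}x^i_j\le\max\{0,|\bigcup_{j\in S}\mathcal F^i_j|-|S|\}$. $\Pi_{\overline{\mathcal K}_i}$ is the Euclidean projection onto $\overline{\mathcal K}_i$.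 Let $\overline{\mathcal K}=\prod_i\overline{\mathcal K}_i$; write $x^{-i}=(x^j)_{j\ne i}$, $\sigma(x)=\sum_iN_ix^i$, $\sigma(x^{-i})=\sum_{j\ne i}N_jx^j$. Data: $A_G$ diagonal positive definite, $b_G\in\mathbb R^{\mathcal M}$; for each $i$, diagonal $A_i,B_i$, vectors $c_i,f_i$, and a diagonal positive semidefinite $D_i$ with $(D_i)_{jj}>0$ whenever $\mathcal F^i_j\ne\emptyset$. $D^*$ denotes the diagonal pseudo-inverse ($D^*_{jj}=1/D_{jj}$ if $D_{jj}\ne0$, else $0$). System optimal pricing: $p_i(x^i,x^{-i})=D_i^*[\tfrac12(N_i^2A_G-A_i)x^i+(N_iA_G-B_i)\sigma(x^{-i})+N_ib_G-c_i-f_i]$. Company cost: $J^i(x^i,x^{-i})=\tfrac12(x^i)^TA_ix^i+(x^i)^TB_i\sigma(x^{-i})+c_i^Tx^i+(x^i)^TD_ip_i(x^i,x^{-i})+f_i^Tx^i$. Game $G$: each company $i$ chooses $x^i\in\overline{\mathcal K}_i$ to minimize $J^i(x^i,x^{-i})$; a Nash equilibrium is $x^*\in\overline{\mathcal K}$ with $J^i(x^{*i},x^{*-i})\le J^i(y^i,x^{*-i})$ for all $y^i\in\overline{\mathcal K}_i$, $i\in\mathcal C$. *)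

theory Defs
  imports "HOL-Analysis.Analysis"
begin

text \<open>Stations are a finite type 'm, companies a finite type 'c (the set of companies
is UNIV), vehicles live in a type 'v. Diagonal matrices are represented by the vector
of their diagonal entries.\<close>

definition dmul :: "real^'m \<Rightarrow> real^'m \<Rightarrow> real^'m" where
  "dmul d x = (\<chi> j. d$j * x$j)"

definition dpinv :: "real^'m \<Rightarrow> real^'m" where
  "dpinv d = (\<chi> j. if d$j \<noteq> 0 then 1 / d$j else 0)"

definition prob_simplex :: "(real^'m) set" where
  "prob_simplex = {x. (\<forall>j. 0 \<le> x$j) \<and> (\<Sum>j\<in>UNIV. x$j) = 1}"

definition Kbar :: "nat \<Rightarrow> ('m::finite \<Rightarrow> 'v set) \<Rightarrow> (real^'m) set" where
  "Kbar N F = {x \<in> prob_simplex. \<forall>S. S \<subset> (UNIV::'m set) \<longrightarrow>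
      real N * (\<Sum>j\<in>S. x$j) \<le> max 0 (real (card (\<Union>j\<in>S. F j)) - real (card S))}"

definition sigma_minus :: "('c::finite \<Rightarrow> nat) \<Rightarrow> 'c \<Rightarrow> ('c \<Rightarrow> real^'m) \<Rightarrow> real^'m" where
  "sigma_minus N i x = (\<Sum>j\<in>UNIV - {i}. real (N j) *\<^sub>R x j)"

definition price ::
  "('c::finite \<Rightarrow> nat) \<Rightarrow> real^'m \<Rightarrow> real^'m \<Rightarrow> ('c \<Rightarrow> real^'m) \<Rightarrow> ('c \<Rightarrow> real^'m)
   \<Rightarrow> ('c \<Rightarrow> real^'m) \<Rightarrow> ('c \<Rightarrow> real^'m) \<Rightarrow> ('c \<Rightarrow> real^'m)
   \<Rightarrow> 'c \<Rightarrow> real^'m \<Rightarrow> ('c \<Rightarrow> real^'m) \<Rightarrow> real^'m" where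
  "price N aG bG a b c f d i y x =
     dmul (dpinv (d i))
       (dmul ((1/2) *\<^sub>R ((real (N i))\<^sup>2 *\<^sub>R aG - a i)) y
        + dmul (real (N i) *\<^sub>R aG - b i) (sigma_minus N i x)
        + real (N i) *\<^sub>R bG - c i - f i)"

text \<open>Company cost J^i(y, x^{-i}) (only the components x j, j \<noteq> i, of x are used).\<close>
definition cost ::
  "('c::finite \<Rightarrow> nat) \<Rightarrow> real^'m \<Rightarrow> real^'m \<Rightarrow> ('c \<Rightarrow> real^'m) \<Rightarrow> ('c \<Rightarrow> real^'m)
   \<Rightarrow> ('c \<Rightarrow> real^'m) \<Rightarrow> ('c \<Rightarrow> real^'m) \<Rightarrow> ('c \<Rightarrow> real^'m)
   \<Rightarrow> 'c \<Rightarrow> real^'m \<Rightarrow> ('c \<Rightarrow> real^'m) \<Rightarrow> real" where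
  "cost N aG bG a b c f d i y x =
     (1/2) * (y \<bullet> dmul (a i) y) + y \<bullet> dmul (b i) (sigma_minus N i x) + c i \<bullet> y
     + y \<bullet> dmul (d i) (price N aG bG a b c f d i y x) + f i \<bullet> y"

definition grad_own ::
  "('c::finite \<Rightarrow> nat) \<Rightarrow> real^'m \<Rightarrow> real^'m \<Rightarrow> ('c \<Rightarrow> real^'m) \<Rightarrow> ('c \<Rightarrow> real^'m)
   \<Rightarrow> ('c \<Rightarrow> real^'m) \<Rightarrow> ('c \<Rightarrow> real^'m) \<Rightarrow> ('c \<Rightarrow> real^'m)
   \<Rightarrow> 'c \<Rightarrow> ('c \<Rightarrow> real^'m) \<Rightarrow> real^'m" where
  "grad_own N aG bG a b c f d i x =
     (THE g. GDERIV (\<lambda>y. cost N aG bG a b c f d i y x) (x i) :> g)"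

definition is_eigenvalue :: "real^'n^'n \<Rightarrow> real \<Rightarrow> bool" where
  "is_eigenvalue F l \<longleftrightarrow> (\<exists>v. v \<noteq> 0 \<and> F *v v = l *\<^sub>R v)"

definition lambda_max :: "real^'n^'n \<Rightarrow> real" where
  "lambda_max F = Max {l. is_eigenvalue F l}"

text \<open>F_1 = A^T A_G A on the stacked space indexed by companies x stations,
  where A x = sigma(x) = sum_i N_i x^i.\<close>
definition F1mat :: "('c::finite \<Rightarrow> nat) \<Rightarrow> real^'m \<Rightarrow> real^('c \<times> 'm)^('c \<times> 'm)" where
  "F1mat N aG = (\<chi> p. \<chi> q. real (N (fst p)) * real (N (fst q)) * (if snd p = snd q then aG$(snd p) else 0))"

definition nash ::
  "('c::finite \<Rightarrow> (real^'m) set) \<Rightarrow> ('c \<Rightarrow> real^'m \<Rightarrow> ('c \<Rightarrow> real^'m) \<Rightarrow> real)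
   \<Rightarrow> ('c \<Rightarrow> real^'m) \<Rightarrow> bool" where
  "nash K J xs \<longleftrightarrow> (\<forall>i. xs i \<in> K i) \<and> (\<forall>i. \<forall>y \<in> K i. J i (xs i) xs \<le> J i y xs)"

end

theory Submission
  imports Defs
begin

lemma fejer_step:
  fixes a b :: "'a::real_inner"
  assumes "norm b \<le> norm a"
  shows "(norm ((1/2) *\<^sub>R (a + b)))\<^sup>2 \<le> (norm a)\<^sup>2 - (1/4) * (norm (a - b))\<^sup>2"
proof -
  have "(norm b)\<^sup>2 \<le> (norm a)\<^sup>2" using assms by (simp add: power_mono)
  then show ?thesis
    by (simp add: power2_norm_eq_inner inner_add_left inner_add_right inner_diff_left inner_diff_right
        inner_commute algebra_simps)
qed

lemma km_converge:
  fixes T :: "'a::euclidean_space \<Rightarrow> 'a" and X :: "nat \<Rightarrow> 'a"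
  assumes K: "compact K" "convex K" "K \<noteq> {}"
    and TK: "\<And>y. y \<in> K \<Longrightarrow> T y \<in> K"
    and ne: "\<And>y z. norm (T y - T z) \<le> norm (y - z)"
    and X0: "X 0 \<in> K"
    and XS: "\<And>k. X (Suc k) = (1/2) *\<^sub>R (X k + T (X k))"
  shows "\<exists>w\<in>K. T w = w \<and> X \<longlonglongrightarrow> w"
proof -
  have contT: "continuous_on UNIV T"
    unfolding continuous_on_iff
    by (metis ne dist_norm le_less_trans)
  obtain z where z: "z \<in> K" "T z = z"
    using brouwer[OF K, of T] continuous_on_subset[OF contT] TK by blast
  have XK: "X k \<in> K" for k
  proof (induction k)
    case 0 then show ?case by (rule X0)
  next
    case (Suc k)
    have "(1/2) *\<^sub>R X k + (1/2) *\<^sub>R T (X k) \<in> K"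
      using K(2) Suc TK unfolding convex_def by auto
    then show ?case by (simp add: XS scaleR_add_right)
  qed
  have fejer: "(norm (X (Suc k) - w))\<^sup>2 \<le> (norm (X k - w))\<^sup>2 - (1/4) * (norm (X k - T (X k)))\<^sup>2"
    if "T w = w" for k w
  proof -
    have "X (Suc k) - w = (1/2) *\<^sub>R ((X k - w) + (T (X k) - w))"
    proof -
      have "w = (1/2) *\<^sub>R (w + w)" by (simp add: scaleR_2[symmetric])
      then show ?thesis by (metis XS diff_add_eq scaleR_right_diff_distrib add_diff_add)
    qed
    moreover have "norm (T (X k) - w) \<le> norm (X k - w)" using ne[of "X k" w] that by simp
    ultimately show ?thesis using fejer_step[of "T (X k) - w" "X k - w"] by simp
  qed
  define d where "d k = (norm (X k - z))\<^sup>2" for k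
  have dS: "d (Suc k) \<le> d k - (1/4) * (norm (X k - T (X k)))\<^sup>2" for k
    using fejer[OF z(2)] by (simp add: d_def)
  have ddec: "decseq d"
  proof (rule decseq_SucI)
    fix k show "d (Suc k) \<le> d k"
      using dS[of k] zero_le_power2[of "norm (X k - T (X k))"] by linarith
  qed
  have dconv: "convergent d"
    using decseq_convergent[OF ddec, of 0] by (auto simp: d_def convergent_def)
  then obtain L where dL: "d \<longlonglongrightarrow> L" by (auto simp: convergent_def)
  have "(\<lambda>k. d k - d (Suc k)) \<longlonglongrightarrow> L - L"
    by (rule tendsto_diff[OF dL LIMSEQ_Suc[OF dL]])
  hence dd0: "(\<lambda>k. d k - d (Suc k)) \<longlonglongrightarrow> 0" by simp
  have "(\<lambda>k. (1/4) * (norm (X k - T (X k)))\<^sup>2) \<longlonglongrightarrow> 0"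
  proof (rule tendsto_sandwich[of "\<lambda>k. 0" _ _ "\<lambda>k. d k - d (Suc k)"])
    show "\<forall>\<^sub>F k in sequentially. 0 \<le> (1/4) * (norm (X k - T (X k)))\<^sup>2"
      by (intro always_eventually allI) simp
    show "\<forall>\<^sub>F k in sequentially. (1/4) * (norm (X k - T (X k)))\<^sup>2 \<le> d k - d (Suc k)"
    proof (intro always_eventually allI)
      fix k show "(1/4) * (norm (X k - T (X k)))\<^sup>2 \<le> d k - d (Suc k)"
        using dS[of k] by linarith
    qed
  qed (use \<open>(\<lambda>k. d k - d (Suc k)) \<longlonglongrightarrow> 0\<close> in auto)
  hence "(\<lambda>k. sqrt (4 * ((1/4) * (norm (X k - T (X k)))\<^sup>2))) \<longlonglongrightarrow> sqrt (4 * 0)"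
    by (rule tendsto_real_sqrt[OF tendsto_mult[OF tendsto_const]])
  moreover have "sqrt (4 * ((1/4) * (norm (X k - T (X k)))\<^sup>2)) = norm (X k - T (X k))" for k
    by simp
  ultimately have "(\<lambda>k. norm (X k - T (X k))) \<longlonglongrightarrow> 0" by simp
  hence r0: "(\<lambda>k. X k - T (X k)) \<longlonglongrightarrow> 0"
    by (rule tendsto_norm_zero_cancel)
  obtain w r where w: "w \<in> K" and r: "strict_mono r" and Xr: "(X \<circ> r) \<longlonglongrightarrow> w"
    using K(1) XK unfolding compact_def by metis
  have "((\<lambda>k. X k - T (X k)) \<circ> r) \<longlonglongrightarrow> 0"
    by (rule LIMSEQ_subseq_LIMSEQ[OF r0 r])
  moreover have "((\<lambda>k. X k - T (X k)) \<circ> r) \<longlonglongrightarrow> w - T w"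
  proof -
    have "(\<lambda>k. T ((X \<circ> r) k)) \<longlonglongrightarrow> T w"
      by (rule continuous_on_tendsto_compose[OF contT Xr]) auto
    then show ?thesis using Xr by (auto simp: o_def intro!: tendsto_diff)
  qed
  ultimately have Tw: "T w = w" using LIMSEQ_unique by fastforce
  define e where "e k = norm (X k - w)" for k
  have edec: "decseq e"
  proof (rule decseq_SucI)
    fix k
    have "(e (Suc k))\<^sup>2 \<le> (e k)\<^sup>2" using fejer[OF Tw, of k] unfolding e_def
      using zero_le_power2[of "norm (X k - T (X k))"] by linarith
    then show "e (Suc k) \<le> e k" by (simp add: e_def power2_le_iff_abs_le)
  qed
  have econv: "convergent e"
    using decseq_convergent[OF edec, of 0] by (auto simp: e_def convergent_def)
  then obtain l where el: "e \<longlonglongrightarrow> l" by (auto simp: convergent_def)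
  have "(e \<circ> r) \<longlonglongrightarrow> 0"
    using Xr unfolding e_def o_def by (simp add: LIM_zero tendsto_norm_zero)
  moreover have "(e \<circ> r) \<longlonglongrightarrow> l" by (rule LIMSEQ_subseq_LIMSEQ[OF el r])
  ultimately have "l = 0" using LIMSEQ_unique by blast
  hence "X \<longlonglongrightarrow> w" using el unfolding e_def
    by (simp add: tendsto_norm_zero_iff LIM_zero_cancel)
  then show ?thesis using w Tw by blast
qed


lemma sum_as_inner: "(\<Sum>j\<in>S. x$j) = (\<chi> j. if j \<in> S then 1 else 0) \<bullet> (x::real^'m::finite)"
proof -
  have "(\<chi> j. if j \<in> S then 1 else 0) \<bullet> x = (\<Sum>i\<in>UNIV. if i \<in> S then x$i else 0)"
    unfolding inner_vec_def by (intro sum.cong) auto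
  also have "\<dots> = (\<Sum>j\<in>S. x$j)" by (simp add: sum.inter_restrict[symmetric])
  finally show ?thesis by simp
qed

lemma Kbar_closed: fixes F :: "'m::finite \<Rightarrow> 'v set" shows "closed (Kbar N F)"
proof -
  let ?I = "\<lambda>S::'m set. (\<chi> j. if j \<in> S then 1 else 0) :: real^'m"
  let ?M = "\<lambda>S. max 0 (real (card (\<Union>j\<in>S. F j)) - real (card S))"
  have "Kbar N F = (\<Inter>j. {x. axis j 1 \<bullet> x \<ge> 0}) \<inter> {x. ?I UNIV \<bullet> x = 1}
      \<inter> (\<Inter>S\<in>{S. S \<subset> UNIV}. {x. (real N *\<^sub>R ?I S) \<bullet> x \<le> ?M S})"
    by (auto simp: Kbar_def prob_simplex_def sum_as_inner inner_axis')
  also have "closed \<dots>"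
    by (intro closed_Int closed_INT ballI closed_halfspace_ge closed_hyperplane closed_halfspace_le)
  finally show ?thesis .
qed

lemma Kbar_convex: fixes F :: "'m::finite \<Rightarrow> 'v set" shows "convex (Kbar N F)"
  unfolding convex_def
proof (intro ballI allI impI)
  fix x y :: "real^'m" and u v :: real
  assume x: "x \<in> Kbar N F" and y: "y \<in> Kbar N F" and uv: "0 \<le> u" "0 \<le> v" "u + v = 1"
  have "u *\<^sub>R x + v *\<^sub>R y \<in> prob_simplex"
    using x y uv by (auto simp: Kbar_def prob_simplex_def sum.distrib sum_distrib_left[symmetric])
  moreover have "real N * (\<Sum>j\<in>S. (u *\<^sub>R x + v *\<^sub>R y)$j) \<le> max 0 (real (card (\<Union>j\<in>S. F j)) - real (card S))"
    if S: "S \<subset> UNIV" for S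
  proof -
    let ?M = "max 0 (real (card (\<Union>j\<in>S. F j)) - real (card S))"
    have "real N * (\<Sum>j\<in>S. x$j) \<le> ?M" "real N * (\<Sum>j\<in>S. y$j) \<le> ?M"
      using x y S by (auto simp: Kbar_def)
    hence "u * (real N * (\<Sum>j\<in>S. x$j)) + v * (real N * (\<Sum>j\<in>S. y$j)) \<le> u * ?M + v * ?M"
      using uv by (intro add_mono mult_left_mono) auto
    also have "\<dots> = ?M" using uv by (simp add: distrib_right[symmetric])
    finally show ?thesis
      by (simp add: sum.distrib sum_distrib_left[symmetric] algebra_simps)
  qed
  ultimately show "u *\<^sub>R x + v *\<^sub>R y \<in> Kbar N F" by (auto simp: Kbar_def)
qed

lemma Kbar_norm: "y \<in> Kbar N F \<Longrightarrow> norm y \<le> 1"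
proof -
  assume "y \<in> Kbar N F"
  hence y: "\<forall>j. 0 \<le> y$j" "(\<Sum>j\<in>UNIV. y$j) = 1" by (auto simp: Kbar_def prob_simplex_def)
  have "norm y \<le> (\<Sum>j\<in>UNIV. \<bar>y$j\<bar>)" by (rule norm_le_l1_cart)
  also have "\<dots> = 1" using y by simp
  finally show ?thesis .
qed

lemma Kbar_zero:
  fixes F :: "'m::finite \<Rightarrow> 'v set"
  assumes "CARD('m) \<ge> 2" "N \<ge> 1" "F j = {}" "y \<in> Kbar N F"
  shows "y$j = 0"
proof -
  have "{j} \<subset> (UNIV::'m set)"
  proof
    show "{j} \<noteq> UNIV"
    proof
      assume h: "{j} = UNIV"
      have "CARD('m) = card {j}" by (simp only: h)
      thus False using assms(1) by simp
    qed
  qed simp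
  then have "real N * (\<Sum>i\<in>{j}. y$i) \<le> max 0 (real (card (\<Union>i\<in>{j}. F i)) - real (card {j}))"
    using assms(4) unfolding Kbar_def by blast
  hence "real N * y$j \<le> 0" using assms(3) by simp
  moreover have y0: "0 \<le> y$j" using assms(4) by (auto simp: Kbar_def prob_simplex_def)
  moreover have "1 * y$j \<le> real N * y$j"
    by (rule mult_right_mono) (use assms(2) y0 in auto)
  ultimately show ?thesis by linarith
qed


definition eact :: "real^'m \<Rightarrow> 'm \<Rightarrow> real" where "eact D j = D$j * dpinv D $ j"

definition alc where
  "alc N aG a d i j = a i$j/2 + eact (d i) j * ((real (N i))\<^sup>2 * aG$j - a i$j)/2"
definition bec where
  "bec N aG bG a b c f d i s j = b i$j * s$j + c i$j + f i$j
     + eact (d i) j * ((real (N i) * aG$j - b i$j) * s$j + real (N i) * bG$j - c i$j - f i$j)"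

lemma cost_formula:
  "cost N aG bG a b c f d i y x =
    (\<Sum>j\<in>UNIV. alc N aG a d i j * (y$j)\<^sup>2 + bec N aG bG a b c f d i (sigma_minus N i x) j * y$j)"
  unfolding cost_def price_def
  apply (simp add: inner_vec_def dmul_def eact_def alc_def bec_def sum_distrib_left flip: sum.distrib)
  apply (intro sum.cong refl)
  apply (simp add: algebra_simps power2_eq_square)
  done

lemma gderiv_quad:
  fixes al be :: "'m::finite \<Rightarrow> real"
  shows "GDERIV (\<lambda>y. \<Sum>j\<in>UNIV. al j * (y$j)\<^sup>2 + be j * y$j) w :> (\<chi> j. 2 * al j * w$j + be j)"
proof -
  have "((\<lambda>y. \<Sum>j\<in>UNIV. al j * (y$j)\<^sup>2 + be j * y$j) has_derivative
      (\<lambda>h. \<Sum>j\<in>UNIV. al j * (2 * w$j * h$j) + be j * h$j)) (at w)"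
    by (rule has_derivative_sum) (auto intro!: derivative_eq_intros bounded_linear_imp_has_derivative)
  moreover have "(\<lambda>h. \<Sum>j\<in>UNIV. al j * (2 * w$j * h$j) + be j * h$j) = (\<lambda>h. h \<bullet> (\<chi> j. 2 * al j * w$j + be j))"
    by (auto simp: inner_vec_def algebra_simps intro!: sum.cong)
  ultimately show ?thesis by (simp add: gderiv_def)
qed

lemma gderiv_the:
  assumes "GDERIV f w :> g"
  shows "(THE g. GDERIV f w :> g) = g"
proof (rule the_equality[where P="\<lambda>g. GDERIV f w :> g", OF assms])
  fix g' assume "GDERIV f w :> g'"
  hence "(\<lambda>h. h \<bullet> g') = (\<lambda>h. h \<bullet> g)"
    using assms unfolding gderiv_def by (rule has_derivative_unique)
  hence "(g' - g) \<bullet> g' = (g' - g) \<bullet> g" by metis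
  hence "(g' - g) \<bullet> (g' - g) = 0" by (simp add: inner_diff_right)
  thus "g' = g" by simp
qed

lemma grad_own_formula:
  "grad_own N aG bG a b c f d i x =
     (\<chi> j. 2 * alc N aG a d i j * x i $ j + bec N aG bG a b c f d i (sigma_minus N i x) j)"
  unfolding grad_own_def cost_formula by (rule gderiv_the[OF gderiv_quad])


lemma F1_mult:
  fixes N :: "'c::finite \<Rightarrow> nat" and aG :: "real^'m::finite"
  shows "(F1mat N aG *v v) $ p = real (N (fst p)) * aG$(snd p) * (\<Sum>k\<in>UNIV. real (N k) * v$(k, snd p))"
proof -
  obtain i j where p: "p = (i,j)" by fastforce
  have "(F1mat N aG *v v) $ p = (\<Sum>q\<in>UNIV. real (N i) * real (N (fst q)) * (if j = snd q then aG$j else 0) * v$q)"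
    by (auto simp: matrix_vector_mult_def F1mat_def p intro!: sum.cong)
  also have "\<dots> = (\<Sum>q\<in>UNIV \<times> UNIV. real (N i) * real (N (fst q)) * (if j = snd q then aG$j else 0) * v$q)"
    by (simp add: UNIV_Times_UNIV)
  also have "\<dots> = (\<Sum>k\<in>UNIV. \<Sum>j'\<in>UNIV. real (N i) * real (N k) * (if j = j' then aG$j else 0) * v$(k,j'))"
    by (simp add: sum.cartesian_product split_beta)
  also have "\<dots> = (\<Sum>k\<in>UNIV. real (N i) * real (N k) * aG$j * v$(k,j))"
    by (intro sum.cong refl) (simp add: if_distrib if_distribR cong: if_cong)
  also have "\<dots> = real (N i) * aG$j * (\<Sum>k\<in>UNIV. real (N k) * v$(k, j))"
    by (simp add: sum_distrib_left algebra_simps)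
  finally show ?thesis by (simp add: p)
qed

lemma lambda_max_ge:
  fixes N :: "'c::finite \<Rightarrow> nat" and aG :: "real^'m::finite"
  assumes N1: "\<And>i. N i \<ge> 1"
  shows "(\<Sum>k\<in>UNIV. (real (N k))\<^sup>2) * aG$j \<le> lambda_max (F1mat N aG)"
proof -
  let ?s = "\<Sum>k\<in>UNIV. (real (N k))\<^sup>2"
  have fin: "finite {l. is_eigenvalue (F1mat N aG) l}"
  proof (rule finite_subset)
    show "{l. is_eigenvalue (F1mat N aG) l} \<subseteq> insert 0 (range (\<lambda>j. ?s * aG$j))"
    proof
      fix l assume "l \<in> {l. is_eigenvalue (F1mat N aG) l}"
      then obtain v where v: "v \<noteq> 0" "F1mat N aG *v v = l *\<^sub>R v" by (auto simp: is_eigenvalue_def)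
      define w where "w j' = (\<Sum>k\<in>UNIV. real (N k) * v$(k, j'))" for j'
      have ev: "real (N k) * aG$j' * w j' = l * v$(k,j')" for k j'
        using arg_cong[OF v(2), of "\<lambda>u. u$(k,j')"] by (simp add: F1_mult w_def)
      show "l \<in> insert 0 (range (\<lambda>j. ?s * aG$j))"
      proof (cases "\<forall>j'. w j' = 0")
        case True
        obtain q where "v$q \<noteq> 0" using v(1) by (metis vec_eq_iff zero_index)
        then obtain k j' where "v$(k,j') \<noteq> 0" by (cases q) auto
        with ev[of k j'] True show ?thesis by simp
      next
        case False
        then obtain j' where wj: "w j' \<noteq> 0" by blast
        have "(\<Sum>k\<in>UNIV. real (N k) * (real (N k) * aG$j' * w j')) = (\<Sum>k\<in>UNIV. real (N k) * (l * v$(k,j')))"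
          using ev by simp
        hence "?s * aG$j' * w j' = l * w j'"
          by (simp add: w_def sum_distrib_left sum_distrib_right power2_eq_square algebra_simps)
        hence "l = ?s * aG$j'" using wj by simp
        then show ?thesis by blast
      qed
    qed
  qed simp
  define v :: "real^('c\<times>'m)" where "v = (\<chi> p. if snd p = j then real (N (fst p)) else 0)"
  obtain i0 :: 'c where True by blast
  have "v \<noteq> 0"
  proof
    assume "v = 0"
    hence "v$(i0,j) = 0" by simp
    thus False using N1[of i0] by (simp add: v_def)
  qed
  moreover have "F1mat N aG *v v = (?s * aG$j) *\<^sub>R v"
    by (auto simp: vec_eq_iff F1_mult v_def power2_eq_square sum_distrib_left algebra_simps if_distrib cong: if_cong)
  ultimately have "is_eigenvalue (F1mat N aG) (?s * aG$j)" by (auto simp: is_eigenvalue_def)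
  then show ?thesis unfolding lambda_max_def using fin by (intro Max_ge) auto
qed


lemma closest_mask:
  fixes y y' :: "real^'m::finite"
  assumes K: "convex K" "closed K" "K \<noteq> {}" and diff: "\<And>j z. y$j \<noteq> y'$j \<Longrightarrow> z \<in> K \<Longrightarrow> z$j = 0"
  shows "closest_point K y = closest_point K y'"
proof -
  define C where "C = (\<Sum>j\<in>UNIV. (y$j)\<^sup>2 - (y'$j)\<^sup>2)"
  have eq: "(dist y z)\<^sup>2 = (dist y' z)\<^sup>2 + C" if z: "z \<in> K" for z
  proof -
    have "(y$j - z$j)\<^sup>2 = (y'$j - z$j)\<^sup>2 + ((y$j)\<^sup>2 - (y'$j)\<^sup>2)" for j
      using diff[of j z] z by (cases "y$j = y'$j") (auto simp: power2_eq_square algebra_simps)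
    hence "(\<Sum>j\<in>UNIV. (y$j - z$j)\<^sup>2) = (\<Sum>j\<in>UNIV. (y'$j - z$j)\<^sup>2) + C"
      by (simp add: C_def sum.distrib)
    moreover have "(norm u)\<^sup>2 = (\<Sum>j\<in>UNIV. (u$j)\<^sup>2)" for u :: "real^'m"
      unfolding power2_norm_eq_inner inner_vec_def by (simp add: power2_eq_square)
    ultimately show ?thesis by (simp add: dist_norm)
  qed
  let ?p = "closest_point K y'"
  have p: "?p \<in> K" using closest_point_in_set K by blast
  show ?thesis
  proof (rule closest_point_unique[OF K(1,2) p, symmetric], intro ballI)
    fix z assume z: "z \<in> K"
    have "dist y' ?p \<le> dist y' z" using closest_point_le[OF K(2) z] .
    hence "(dist y' ?p)\<^sup>2 \<le> (dist y' z)\<^sup>2" by (simp add: power_mono)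
    hence "(dist y ?p)\<^sup>2 \<le> (dist y z)\<^sup>2" using eq[OF p] eq[OF z] by simp
    thus "dist y ?p \<le> dist y z" by (simp add: power2_le_iff_abs_le)
  qed
qed

lemma coco:
  fixes V :: "real^'m::finite^'c::finite" and N :: "'c \<Rightarrow> nat" and aG :: "real^'m" and lam :: real
  defines "w \<equiv> (\<Sum>i\<in>UNIV. real (N i) *\<^sub>R V$i)"
  defines "D \<equiv> (\<chi> i. \<chi> j. real (N i) * aG$j * w$j)"
  assumes lam: "\<And>j. (\<Sum>k\<in>UNIV. (real (N k))\<^sup>2) * aG$j \<le> lam" and aG: "\<And>j. aG$j > 0"
  shows "D \<bullet> V = (\<Sum>j\<in>UNIV. aG$j * (w$j)\<^sup>2)" and "D \<bullet> D \<le> lam * (D \<bullet> V)"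
proof -
  have wj: "w$j = (\<Sum>i\<in>UNIV. real (N i) * V$i$j)" for j by (simp add: w_def sum_component)
  have "D \<bullet> V = (\<Sum>i\<in>UNIV. \<Sum>j\<in>UNIV. real (N i) * aG$j * w$j * V$i$j)"
    by (simp add: D_def inner_vec_def)
  also have "\<dots> = (\<Sum>j\<in>UNIV. aG$j * w$j * (\<Sum>i\<in>UNIV. real (N i) * V$i$j))"
    by (subst sum.swap) (simp add: sum_distrib_left algebra_simps)
  also have "\<dots> = (\<Sum>j\<in>UNIV. aG$j * (w$j)\<^sup>2)" by (simp add: wj power2_eq_square mult.assoc)
  finally show DV: "D \<bullet> V = (\<Sum>j\<in>UNIV. aG$j * (w$j)\<^sup>2)" .
  let ?s = "\<Sum>k\<in>UNIV. (real (N k))\<^sup>2"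
  have "D \<bullet> D = (\<Sum>i\<in>UNIV. \<Sum>j\<in>UNIV. (real (N i))\<^sup>2 * ((aG$j)\<^sup>2 * (w$j)\<^sup>2))"
    by (simp add: D_def inner_vec_def power2_eq_square algebra_simps)
  also have "\<dots> = (\<Sum>j\<in>UNIV. \<Sum>i\<in>UNIV. (real (N i))\<^sup>2 * ((aG$j)\<^sup>2 * (w$j)\<^sup>2))"
    by (rule sum.swap)
  also have "\<dots> = (\<Sum>j\<in>UNIV. ?s * ((aG$j)\<^sup>2 * (w$j)\<^sup>2))"
    by (simp add: sum_distrib_right)
  also have "\<dots> = (\<Sum>j\<in>UNIV. (?s * aG$j) * (aG$j * (w$j)\<^sup>2))"
    by (simp add: power2_eq_square algebra_simps)
  also have "\<dots> \<le> (\<Sum>j\<in>UNIV. lam * (aG$j * (w$j)\<^sup>2))"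
    by (intro sum_mono mult_right_mono lam) (simp add: aG less_imp_le)
  also have "\<dots> = lam * (D \<bullet> V)" by (simp add: DV sum_distrib_left)
  finally show "D \<bullet> D \<le> lam * (D \<bullet> V)" .
qed

lemma norm_sq_vec: "(norm (Z :: real^'m::finite^'c::finite))\<^sup>2 = (\<Sum>i\<in>UNIV. (norm (Z$i))\<^sup>2)"
  unfolding power2_norm_eq_inner inner_vec_def by simp

theorem proposition2:
  fixes V :: "'c::finite \<Rightarrow> 'v set"
    and F :: "'c \<Rightarrow> 'm::finite \<Rightarrow> 'v set"
    and aG bG :: "real^'m"
    and a b c f d :: "'c \<Rightarrow> real^'m"
    and \<gamma> :: real
    and x :: "nat \<Rightarrow> 'c \<Rightarrow> real^'m"
  defines "N \<equiv> (\<lambda>i. card (V i))"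
  assumes m2: "CARD('m) \<ge> 2"
    and finV: "\<And>i. finite (V i)"
    and N1: "\<And>i. card (V i) \<ge> 1"
    and FV: "\<And>i j. F i j \<subseteq> V i"
    and reach: "\<And>i v. v \<in> V i \<Longrightarrow> \<exists>j. v \<in> F i j"
    and Kne: "\<And>i. Kbar (N i) (F i) \<noteq> {}"
    and aG_pos: "\<And>j. aG$j > 0"
    and d_nonneg: "\<And>i j. d i $ j \<ge> 0"
    and d_pos: "\<And>i j. F i j \<noteq> {} \<Longrightarrow> d i $ j > 0"
    and \<gamma>_pos: "0 < \<gamma>"
    and \<gamma>_lt: "\<gamma> < 2 / lambda_max (F1mat N aG)"
    and x0: "\<And>i. x 0 i \<in> Kbar (N i) (F i)"
    and iter: "\<And>k i. x (Suc k) i =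
       (1/2) *\<^sub>R (x k i + closest_point (Kbar (N i) (F i))
                    (x k i - \<gamma> *\<^sub>R grad_own N aG bG a b c f d i (x k)))"
  shows "\<exists>xs. nash (\<lambda>i. Kbar (N i) (F i)) (cost N aG bG a b c f d) xs
             \<and> (\<forall>i. (\<lambda>k. x k i) \<longlonglongrightarrow> xs i)"
proof -
  define Kc where "Kc i = Kbar (N i) (F i)" for i
  define sig :: "real^'m^'c \<Rightarrow> real^'m" where "sig X = (\<Sum>i\<in>UNIV. real (N i) *\<^sub>R X$i)" for X
  define Gp where "Gp X = (\<chi> i. \<chi> j. real (N i) * (aG$j * sig X $ j + bG$j))" for X
  define T where "T X = (\<chi> i. closest_point (Kc i) (X$i - \<gamma> *\<^sub>R Gp X $ i))" for X
  define Kp where "Kp = {X. \<forall>i. X$i \<in> Kc i}"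
  define Xs where "Xs k = (\<chi> i. x k i)" for k
  define lam where "lam = lambda_max (F1mat N aG)"
  have N1': "N i \<ge> 1" for i using N1 by (simp add: N_def)
  have Kcc: "convex (Kc i)" "closed (Kc i)" "Kc i \<noteq> {}" for i
    using Kbar_convex Kbar_closed Kne by (auto simp: Kc_def)
  have lamge: "(\<Sum>k\<in>UNIV. (real (N k))\<^sup>2) * aG$j \<le> lam" for j
    unfolding lam_def by (rule lambda_max_ge[OF N1'])
  have lampos: "lam > 0"
  proof -
    obtain j :: 'm where True by blast
    have "(\<Sum>k\<in>UNIV. (real (N k))\<^sup>2) > 0"
      by (rule sum_pos) (use N1' in \<open>auto intro: order_less_le_trans[OF zero_less_one]\<close>)
    hence "(\<Sum>k\<in>UNIV. (real (N k))\<^sup>2) * aG$j > 0" using aG_pos by simp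
    thus ?thesis using lamge[of j] by linarith
  qed
  have gl: "\<gamma> * lam < 2" using \<gamma>_lt lampos by (simp add: lam_def pos_less_divide_eq)
  have zero: "z$j = 0" if "d i $ j = 0" "z \<in> Kc i" for i j z
  proof -
    have "F i j = {}" using d_pos[of i j] that(1) by fastforce
    thus ?thesis using Kbar_zero[OF m2 N1'[of i] _ that(2)[unfolded Kc_def]] by blast
  qed
  have sigsplit: "sig (\<chi> i. y i) = real (N i) *\<^sub>R y i + sigma_minus N i y" for y i
    unfolding sig_def sigma_minus_def by (simp add: sum.remove[of UNIV i])
  have eact1: "d i $ j \<noteq> 0 \<Longrightarrow> eact (d i) j = 1" for i j
    by (simp add: eact_def dpinv_def)
  have alc_act: "d i $ j \<noteq> 0 \<Longrightarrow> alc N aG a d i j = (real (N i))\<^sup>2 * aG$j / 2" for i j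
    by (simp add: alc_def eact1 field_simps)
  have bec_act: "d i $ j \<noteq> 0 \<Longrightarrow> bec N aG bG a b c f d i s j = real (N i) * aG$j * s$j + real (N i) * bG$j" for i j s
    by (simp add: bec_def eact1 algebra_simps)
  have active: "grad_own N aG bG a b c f d i y $ j = Gp (\<chi> i. y i) $ i $ j" if "d i $ j \<noteq> 0" for i j y
    using that by (simp add: grad_own_formula alc_act bec_act Gp_def sigsplit[of y i] power2_eq_square algebra_simps)
  have XS: "Xs (Suc k) = (1/2) *\<^sub>R (Xs k + T (Xs k))" for k
  proof -
    have "closest_point (Kc i) (x k i - \<gamma> *\<^sub>R grad_own N aG bG a b c f d i (x k))
        = closest_point (Kc i) (Xs k $ i - \<gamma> *\<^sub>R Gp (Xs k) $ i)" for i
    proof (rule closest_mask[OF Kcc])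
      fix j z
      assume ne: "(x k i - \<gamma> *\<^sub>R grad_own N aG bG a b c f d i (x k)) $ j \<noteq> (Xs k $ i - \<gamma> *\<^sub>R Gp (Xs k) $ i) $ j"
        and z: "z \<in> Kc i"
      have "d i $ j = 0"
      proof (rule ccontr)
        assume "d i $ j \<noteq> 0"
        from active[OF this, of "x k"] ne show False by (simp add: Xs_def)
      qed
      thus "z $ j = 0" using zero z by blast
    qed
    then show ?thesis by (simp add: vec_eq_iff iter Xs_def T_def Kc_def)
  qed
  have TK: "T X \<in> Kp" for X
    unfolding T_def Kp_def using closest_point_in_set[OF Kcc(2) Kcc(3)] by simp
  have ne: "norm (T X - T Y) \<le> norm (X - Y)" for X Y
  proof -
    define U where "U = (X - \<gamma> *\<^sub>R Gp X) - (Y - \<gamma> *\<^sub>R Gp Y)"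
    define W where "W = X - Y"
    define w where "w = (\<Sum>i\<in>UNIV. real (N i) *\<^sub>R W$i)"
    define D where "D = (\<chi> i. \<chi> j. real (N i) * aG$j * w$j)"
    have sigd: "sig X - sig Y = w"
      by (simp add: sig_def w_def W_def sum_subtractf[symmetric] scaleR_diff_right)
    have GD: "Gp X - Gp Y = D"
      by (simp add: vec_eq_iff Gp_def D_def sigd[symmetric] algebra_simps)
    have UD: "U = W - \<gamma> *\<^sub>R D" by (simp add: U_def W_def GD[symmetric] algebra_simps)
    have c1: "D \<bullet> W = (\<Sum>j\<in>UNIV. aG$j * (w$j)\<^sup>2)" and c2: "D \<bullet> D \<le> lam * (D \<bullet> W)"
      using coco[of N aG lam W, OF lamge aG_pos] by (simp_all add: w_def D_def)
    have DW0: "D \<bullet> W \<ge> 0" unfolding c1 by (intro sum_nonneg) (simp add: aG_pos less_imp_le)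
    have "(norm (T X - T Y))\<^sup>2 = (\<Sum>i\<in>UNIV. (norm (T X $ i - T Y $ i))\<^sup>2)" by (simp add: norm_sq_vec)
    also have "\<dots> \<le> (\<Sum>i\<in>UNIV. (norm (U $ i))\<^sup>2)"
    proof (intro sum_mono power_mono)
      fix i
      show "norm (T X $ i - T Y $ i) \<le> norm (U $ i)"
        using closest_point_lipschitz[OF Kcc(1)[of i] Kcc(2)[of i] Kcc(3)[of i], of "X$i - \<gamma> *\<^sub>R Gp X $ i" "Y$i - \<gamma> *\<^sub>R Gp Y $ i"]
        by (simp add: T_def U_def dist_norm)
    qed simp
    also have "\<dots> = U \<bullet> U" by (simp add: power2_norm_eq_inner inner_vec_def)
    also have "\<dots> = W \<bullet> W - 2 * \<gamma> * (D \<bullet> W) + \<gamma>\<^sup>2 * (D \<bullet> D)"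
      by (simp add: UD inner_diff_left inner_diff_right inner_commute power2_eq_square algebra_simps)
    also have "\<dots> \<le> W \<bullet> W - 2 * \<gamma> * (D \<bullet> W) + \<gamma>\<^sup>2 * (lam * (D \<bullet> W))"
      using c2 by (intro add_left_mono mult_left_mono) auto
    also have "\<dots> = W \<bullet> W - \<gamma> * (2 - \<gamma> * lam) * (D \<bullet> W)" by (simp add: power2_eq_square algebra_simps)
    also have "\<dots> \<le> W \<bullet> W" using gl DW0 \<gamma>_pos by simp
    also have "\<dots> = (norm (X - Y))\<^sup>2" by (simp add: W_def power2_norm_eq_inner)
    finally show ?thesis by (simp add: power2_le_iff_abs_le)
  qed
  have Kp_conv: "convex Kp"
    unfolding convex_def Kp_def using Kcc(1) unfolding convex_def by simp
  have Kp_comp: "compact Kp"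
    unfolding compact_eq_bounded_closed
  proof (rule conjI)
    show "bounded Kp" unfolding bounded_iff
    proof (intro exI ballI)
      fix X assume X: "X \<in> Kp"
      have "norm X \<le> (\<Sum>i\<in>UNIV. norm (X$i))" unfolding norm_vec_def by (rule L2_set_le_sum) simp
      also have "\<dots> \<le> (\<Sum>i\<in>(UNIV::'c set). 1)"
        using X by (intro sum_mono) (auto simp: Kp_def Kc_def intro: Kbar_norm)
      finally show "norm X \<le> real CARD('c)" by simp
    qed
    have "Kp = (\<Inter>i. (\<lambda>X. X$i) -` Kc i)" by (auto simp: Kp_def)
    also have "closed \<dots>"
      by (intro closed_INT ballI continuous_closed_vimage Kcc) (auto intro: continuous_intros)
    finally show "closed Kp" .
  qed
  have X0: "Xs 0 \<in> Kp" using x0 by (simp add: Kp_def Kc_def Xs_def)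
  obtain Wf where Wf: "Wf \<in> Kp" "T Wf = Wf" "Xs \<longlonglongrightarrow> Wf"
    using km_converge[OF Kp_comp Kp_conv _ TK ne X0 XS] X0 by blast
  define xs where "xs i = Wf $ i" for i
  have conv: "(\<lambda>k. x k i) \<longlonglongrightarrow> xs i" for i
    using tendsto_vec_nth[OF Wf(3), of i] by (simp add: Xs_def xs_def)
  have Wxs: "(\<chi> i. xs i) = Wf" by (simp add: xs_def vec_eq_iff)
  have nashp: "cost N aG bG a b c f d i (xs i) xs \<le> cost N aG bG a b c f d i y xs" if y: "y \<in> Kc i" for i y
  proof -
    let ?w = "xs i" and ?g = "Gp Wf $ i"
    have wK: "?w \<in> Kc i" using Wf(1) by (simp add: Kp_def xs_def)
    have fixw: "?w = closest_point (Kc i) (?w - \<gamma> *\<^sub>R ?g)"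
      using arg_cong[OF Wf(2), of "\<lambda>X. X$i"] by (simp add: T_def xs_def)
    have "inner ((?w - \<gamma> *\<^sub>R ?g) - ?w) (y - ?w) \<le> 0"
    proof (rule any_closest_point_dot[OF Kcc(1,2) wK y], intro ballI)
      fix z assume "z \<in> Kc i"
      then show "dist (?w - \<gamma> *\<^sub>R ?g) ?w \<le> dist (?w - \<gamma> *\<^sub>R ?g) z"
        using closest_point_le[OF Kcc(2)] fixw by metis
    qed
    hence gi: "?g \<bullet> (y - ?w) \<ge> 0" using \<gamma>_pos
      by (simp add: inner_diff_left mult_le_0_iff zero_le_mult_iff)
    let ?s = "sigma_minus N i xs"
    have pt: "alc N aG a d i j * (?w$j)\<^sup>2 + bec N aG bG a b c f d i ?s j * ?w$j + ?g$j * (y$j - ?w$j)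
        \<le> alc N aG a d i j * (y$j)\<^sup>2 + bec N aG bG a b c f d i ?s j * y$j" for j
    proof (cases "d i $ j = 0")
      case True
      then show ?thesis using zero[OF True y] zero[OF True wK] by simp
    next
      case False
      have gj: "?g$j = 2 * alc N aG a d i j * ?w$j + bec N aG bG a b c f d i ?s j"
        using active[OF False, of xs] by (simp add: Wxs grad_own_formula)
      have al0: "alc N aG a d i j \<ge> 0" unfolding alc_act[OF False] using aG_pos[of j] by simp
      have "0 \<le> alc N aG a d i j * (y$j - ?w$j)\<^sup>2" using al0 by simp
      then show ?thesis by (simp add: gj power2_eq_square algebra_simps)
    qed
    have "cost N aG bG a b c f d i (xs i) xs + ?g \<bullet> (y - ?w) \<le> cost N aG bG a b c f d i y xs"
      unfolding cost_formula inner_vec_def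
      using sum_mono[of UNIV, OF pt] by (simp add: sum.distrib)
    then show ?thesis using gi by linarith
  qed
  have "nash (\<lambda>i. Kbar (N i) (F i)) (cost N aG bG a b c f d) xs"
    unfolding nash_def using nashp Wf(1) by (auto simp: Kc_def Kp_def xs_def)
  then show ?thesis using conv by blast
qed

end
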